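(* Let $(\mathfrak g,r)$ be a triangular Lie bialgebra such that $r:\mathfrak g^*\to\mathfrak g$ is invertible. For $\lambda_1,\lambda_2,\lambda_3,\lambda_4\in\mathbb R$ define $N=N_{\lambda_1,\lambda_2,\lambda_3,\lambda_4}:\mathcal D(\mathfrak g)\to\mathcal D(\mathfrak g)$ by $N(x,a^* )=(\lambda_1r(a^* )+\lambda_2x,\ \lambda_3r^{-1}(x)+\lambda_4a^* )$. Then $N$ is a Nijenhuis tensor on $\mathcal D(\mathfrak g)$: $[N(X),N(Y)]+N^2([X,Y])=N([N(X),Y]+[X,N(Y)])$ for all $X,Y\in\mathcal D(\mathfrak g)$.
   Context: $\mathfrak g$ a finite-dimensional real Lie algebra; $r\in\mathfrak g\otimes\mathfrak g$ identified with $r:\mathfrak g^*\to\mathfrak g$ via $\langle r(a^* ),b^*\rangle=\langle a^*\otimes b^*,r\rangle$. $(\mathfrak g,r)$ triangular means $r$ is skew-symmetric and satisfies the CYBE $[r_{12},r_{13}]+[r_{12},r_{23}]+[r_{13},r_{23}]=0$ (for $r=\sum a_i\otimes b_i$: $[r_{12},r_{13}]=\sum[a_i,a_j]\otimes b_i\otimes b_j$, $[r_{12},r_{23}]=\sum a_i\otimes[b_i,a_j]\otimes b_j$, $[r_{13},r_{23}]=\sum a_i\otimes a_j\otimes[b_i,b_j]$). Coadjoint action $\langle\mathrm{ad}^*(x)a^*,y\rangle=-\langle a^*,[x,y]\rangle$. Put $[a^*,b^*]_\delta=\mathrm{ad}^*(r(a^* ))b^*-\mathrm{ad}^*(r(b^*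 ))a^*$ on $\mathfrak g^*$ and, for $a^*\in\mathfrak g^*,x\in\mathfrak g$, $\langle\mathrm{ad}^*(a^* )x,b^*\rangle=-\langle x,[a^*,b^*]_\delta\rangle$. The Drinfeld double $\mathcal D(\mathfrak g)=\mathfrak g\oplus\mathfrak g^*$ has bracket $[(x,a^* ),(y,b^* )]=([x,y]+\mathrm{ad}^*(a^* )y-\mathrm{ad}^*(b^* )x,\ [a^*,b^*]_\delta+\mathrm{ad}^*(x)b^*-\mathrm{ad}^*(y)a^* )$. *)

theory Defs
  imports "HOL-Analysis.Analysis"
begin

text \<open>The finite-dimensional real Lie algebra g is modelled in a fixed basis
  as real^'n (basis vectors axis i 1); its dual g* is modelled as real^'n as well, with the
  dual basis, so the pairing of a covector a and a vector x is a \<bullet> x.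
  An element r = sum_{i,j} r_ij e_i (x) e_j of g (x) g is the matrix R with R$i$j = r_ij.\<close>

definition lie_algebra :: "(real^'n \<Rightarrow> real^'n \<Rightarrow> real^'n) \<Rightarrow> bool" where
  "lie_algebra br \<longleftrightarrow> bilinear br \<and> (\<forall>x. br x x = 0) \<and>
     (\<forall>x y z. br x (br y z) + br y (br z x) + br z (br x y) = 0)"

text \<open>r : g* -> g, determined by <r(a), b> = <a (x) b, r> = sum_{i,j} r_ij a_i b_j.\<close>
definition rmap :: "real^'n^'n \<Rightarrow> real^'n \<Rightarrow> real^'n" where
  "rmap R a = (\<chi> j. \<Sum>i\<in>UNIV. R$i$j * a$i)"

text \<open>Components (p,q,s) of [r12,r13], [r12,r23], [r13,r23] in the basis e_p (x) e_q (x) e_s.\<close>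
definition cybe12_13 :: "(real^'n \<Rightarrow> real^'n \<Rightarrow> real^'n) \<Rightarrow> real^'n^'n \<Rightarrow> 'n \<Rightarrow> 'n \<Rightarrow> 'n \<Rightarrow> real" where
  "cybe12_13 br R p q s = (\<Sum>i\<in>UNIV. \<Sum>k\<in>UNIV. R$i$q * R$k$s * (br (axis i 1) (axis k 1))$p)"

definition cybe12_23 :: "(real^'n \<Rightarrow> real^'n \<Rightarrow> real^'n) \<Rightarrow> real^'n^'n \<Rightarrow> 'n \<Rightarrow> 'n \<Rightarrow> 'n \<Rightarrow> real" where
  "cybe12_23 br R p q s = (\<Sum>j\<in>UNIV. \<Sum>k\<in>UNIV. R$p$j * R$k$s * (br (axis j 1) (axis k 1))$q)"

definition cybe13_23 :: "(real^'n \<Rightarrow> real^'n \<Rightarrow> real^'n) \<Rightarrow> real^'n^'n \<Rightarrow> 'n \<Rightarrow> 'n \<Rightarrow> 'n \<Rightarrow> real" where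
  "cybe13_23 br R p q s = (\<Sum>j\<in>UNIV. \<Sum>l\<in>UNIV. R$p$j * R$q$l * (br (axis j 1) (axis l 1))$s)"

definition triangular :: "(real^'n \<Rightarrow> real^'n \<Rightarrow> real^'n) \<Rightarrow> real^'n^'n \<Rightarrow> bool" where
  "triangular br R \<longleftrightarrow> transpose R = - R \<and>
     (\<forall>p q s. cybe12_13 br R p q s + cybe12_23 br R p q s + cybe13_23 br R p q s = 0)"

text \<open>Coadjoint action of g on g*: <ad*(x) a, y> = - <a, [x,y]>.\<close>
definition coad :: "(real^'n \<Rightarrow> real^'n \<Rightarrow> real^'n) \<Rightarrow> real^'n \<Rightarrow> real^'n \<Rightarrow> real^'n" where
  "coad br x a = (\<chi> i. - (a \<bullet> br x (axis i 1)))"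

definition dbr :: "(real^'n \<Rightarrow> real^'n \<Rightarrow> real^'n) \<Rightarrow> real^'n^'n \<Rightarrow> real^'n \<Rightarrow> real^'n \<Rightarrow> real^'n" where
  "dbr br R a b = coad br (rmap R a) b - coad br (rmap R b) a"

text \<open>Coadjoint action of g* on g: <ad*(a) x, b> = - <x, [a,b]_delta>.\<close>
definition coad_star :: "(real^'n \<Rightarrow> real^'n \<Rightarrow> real^'n) \<Rightarrow> real^'n^'n \<Rightarrow> real^'n \<Rightarrow> real^'n \<Rightarrow> real^'n" where
  "coad_star br R a x = (\<chi> i. - (x \<bullet> dbr br R a (axis i 1)))"

definition double_br :: "(real^'n \<Rightarrow> real^'n \<Rightarrow> real^'n) \<Rightarrow> real^'n^'n \<Rightarrow>
    ((real^'n) \<times> (real^'n)) \<Rightarrow> ((real^'n) \<times> (real^'n)) \<Rightarrow> ((real^'n) \<times> (real^'n))" where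
  "double_br br R X Y = (case X of (x, a) \<Rightarrow> case Y of (y, b) \<Rightarrow>
     (br x y + coad_star br R a y - coad_star br R b x,
      dbr br R a b + coad br x b - coad br y a))"

definition Nten :: "real^'n^'n \<Rightarrow> real \<Rightarrow> real \<Rightarrow> real \<Rightarrow> real \<Rightarrow>
    ((real^'n) \<times> (real^'n)) \<Rightarrow> ((real^'n) \<times> (real^'n))" where
  "Nten R l1 l2 l3 l4 X = (case X of (x, a) \<Rightarrow>
     (l1 *\<^sub>R rmap R a + l2 *\<^sub>R x, l3 *\<^sub>R inv (rmap R) x + l4 *\<^sub>R a))"

end

theory Submission
  imports Defs
begin


lemma rmap_add: "rmap R (a + b) = rmap R a + rmap R b"
  by (simp add: rmap_def vec_eq_iff distrib_left sum.distrib)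
lemma rmap_scale: "rmap R (c *\<^sub>R a) = c *\<^sub>R rmap R a"
  by (simp add: rmap_def vec_eq_iff sum_distrib_left mult_ac)
lemma rmap_linear: "linear (rmap R)"
  by (simp add: linear_iff rmap_add rmap_scale)

lemma coad_add2: "coad br x (a + b) = coad br x a + coad br x b"
  by (simp add: coad_def vec_eq_iff inner_add_left)
lemma coad_scale2: "coad br x (c *\<^sub>R a) = c *\<^sub>R coad br x a"
  by (simp add: coad_def vec_eq_iff)
lemma coad_linear2: "linear (coad br x)"
  by (simp add: linear_iff coad_add2 coad_scale2)

lemma coad_add1: "bilinear br \<Longrightarrow> coad br (x + y) a = coad br x a + coad br y a"
  by (simp add: coad_def vec_eq_iff bilinear_ladd inner_add_right)
lemma coad_scale1: "bilinear br \<Longrightarrow> coad br (c *\<^sub>R x) a = c *\<^sub>R coad br x a"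
  by (simp add: coad_def vec_eq_iff bilinear_lmul)
lemma coad_linear1: "bilinear br \<Longrightarrow> linear (\<lambda>x. coad br x a)"
  by (simp add: linear_iff coad_add1 coad_scale1)

lemma skewR: "transpose R = - R \<Longrightarrow> R$j$i = - R$i$j"
proof -
  assume a: "transpose R = - R"
  have "(transpose R)$i$j = (-R)$i$j" by (simp add: a)
  then show ?thesis by (simp add: transpose_def)
qed

lemma skew_pair:
  assumes "transpose R = - R"
  shows "c \<bullet> rmap R d = - (d \<bullet> rmap R c)"
proof -
  have "c \<bullet> rmap R d = (\<Sum>j\<in>UNIV. \<Sum>i\<in>UNIV. c$j * (R$i$j * d$i))"
    by (simp add: inner_vec_def rmap_def sum_distrib_left)
  also have "\<dots> = (\<Sum>i\<in>UNIV. \<Sum>j\<in>UNIV. c$j * (R$i$j * d$i))"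
    by (rule sum.swap)
  also have "\<dots> = - (\<Sum>i\<in>UNIV. \<Sum>j\<in>UNIV. d$i * (R$j$i * c$j))"
    unfolding sum_negf[symmetric]
    by (intro sum.cong refl) (subst skewR[OF assms], simp add: mult_ac)
  also have "\<dots> = - (d \<bullet> rmap R c)"
    by (simp add: inner_vec_def rmap_def sum_distrib_left)
  finally show ?thesis .
qed

lemma rmap_axis: "rmap R (axis m 1) = R$m"
  by (simp add: rmap_def vec_eq_iff axis_def if_distrib[of "\<lambda>t. _ * t"] cong: if_cong)

lemma rmap_comp:
  assumes "transpose R = - R"
  shows "rmap R c $ i = - (c \<bullet> rmap R (axis i 1))"
  unfolding rmap_axis
  unfolding rmap_def inner_vec_def sum_negf[symmetric]
  by (simp, intro sum.cong refl) (subst skewR[OF assms], simp add: mult_ac)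

lemma br_expl: "bilinear br \<Longrightarrow> br x y = (\<Sum>k\<in>UNIV. x$k *\<^sub>R br (axis k 1) y)"
proof -
  assume b: "bilinear br"
  have l: "linear (\<lambda>x. br x y)" using b by (simp add: bilinear_def)
  have "br x y = br (\<Sum>k\<in>UNIV. x$k *\<^sub>R axis k 1) y"
    using basis_expansion[of x] by (simp add: scalar_mult_eq_scaleR)
  also have "\<dots> = (\<Sum>k\<in>UNIV. x$k *\<^sub>R br (axis k 1) y)"
    by (subst linear_sum[OF l]) (simp add: linear_scale[OF l])
  finally show ?thesis .
qed

lemma br_expr: "bilinear br \<Longrightarrow> br x y = (\<Sum>k\<in>UNIV. y$k *\<^sub>R br x (axis k 1))"
proof -
  assume b: "bilinear br"
  have l: "linear (\<lambda>y. br x y)" using b by (simp add: bilinear_def)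
  have "br x y = br x (\<Sum>k\<in>UNIV. y$k *\<^sub>R axis k 1)"
    using basis_expansion[of y] by (simp add: scalar_mult_eq_scaleR)
  also have "\<dots> = (\<Sum>k\<in>UNIV. y$k *\<^sub>R br x (axis k 1))"
    by (subst linear_sum[OF l]) (simp add: linear_scale[OF l])
  finally show ?thesis .
qed

lemma coad_inner:
  assumes "bilinear br"
  shows "coad br w a \<bullet> v = - (a \<bullet> br w v)"
proof -
  have "coad br w a \<bullet> v = (\<Sum>j\<in>UNIV. - (a \<bullet> br w (axis j 1)) * v$j)"
    by (simp add: coad_def inner_vec_def)
  also have "\<dots> = - (a \<bullet> (\<Sum>j\<in>UNIV. v$j *\<^sub>R br w (axis j 1)))"
    by (simp add: inner_sum_right sum_negf[symmetric] mult_ac)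
  also have "\<dots> = - (a \<bullet> br w v)" using br_expr[OF assms, of w v] by simp
  finally show ?thesis .
qed



lemma hom_basis:
  assumes b: "bilinear br" and t: "triangular br R"
  shows "rmap R (dbr br R (axis m 1) (axis n 1)) = br (R$m) (R$n)"
proof -
  have sk: "transpose R = - R" using t by (simp add: triangular_def)
  have cy: "cybe12_13 br R m n q + cybe12_23 br R m n q + cybe13_23 br R m n q = 0" for q
    using t by (simp add: triangular_def)
  define c where "c i k p = br (axis i 1) (axis k 1) $ p" for i k p
  have e1: "br w (axis j 1) $ p = (\<Sum>k\<in>UNIV. w$k * c k j p)" for w j p
    by (subst br_expl[OF b]) (simp add: c_def)
  have e2: "br w v $ p = (\<Sum>i\<in>UNIV. w$i * (\<Sum>k\<in>UNIV. v$k * c i k p))" for w v p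
    by (subst br_expl[OF b], subst br_expr[OF b]) (simp add: c_def)
  have d: "dbr br R (axis m 1) (axis n 1) $ j = - (\<Sum>k\<in>UNIV. R$m$k * c k j n) + (\<Sum>k\<in>UNIV. R$n$k * c k j m)" for j
    by (simp add: dbr_def coad_def rmap_axis inner_axis' e1)
  show ?thesis
  unfolding vec_eq_iff proof (intro allI)
    fix q
    define T1 where "T1 = (\<Sum>j\<in>UNIV. \<Sum>k\<in>UNIV. R$j$q * (R$m$k * c k j n))"
    define T2 where "T2 = (\<Sum>j\<in>UNIV. \<Sum>k\<in>UNIV. R$j$q * (R$n$k * c k j m))"
    have L: "rmap R (dbr br R (axis m 1) (axis n 1)) $ q = - T1 + T2"
    proof -
      have "rmap R (dbr br R (axis m 1) (axis n 1)) $ q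
          = (\<Sum>j\<in>UNIV. R$j$q * (\<Sum>k\<in>UNIV. R$n$k * c k j m) - R$j$q * (\<Sum>k\<in>UNIV. R$m$k * c k j n))"
        by (simp add: rmap_def d right_diff_distrib)
      also have "\<dots> = - T1 + T2"
        by (simp only: sum_subtractf T1_def T2_def sum_distrib_left)
      finally show ?thesis .
    qed
    have "T1 = (\<Sum>k\<in>UNIV. \<Sum>j\<in>UNIV. R$j$q * (R$m$k * c k j n))"
      unfolding T1_def by (rule sum.swap)
    also have "\<dots> = cybe12_23 br R m n q"
      by (simp add: cybe12_23_def c_def mult_ac)
    finally have t1: "T1 = cybe12_23 br R m n q" .
    have "T2 = (\<Sum>k\<in>UNIV. \<Sum>j\<in>UNIV. R$j$q * (R$n$k * c k j m))"
      unfolding T2_def by (rule sum.swap)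
    also have "\<dots> = (\<Sum>k\<in>UNIV. \<Sum>j\<in>UNIV. - (R$k$n * R$j$q * c k j m))"
    proof (intro sum.cong refl)
      fix k j
      have "R$n$k = - R$k$n" by (rule skewR[OF sk])
      then show "R$j$q * (R$n$k * c k j m) = - (R$k$n * R$j$q * c k j m)" by simp
    qed
    also have "\<dots> = - cybe12_13 br R m n q"
      by (simp add: cybe12_13_def c_def sum_negf)
    finally have t2: "T2 = - cybe12_13 br R m n q" .
    have r: "br (R$m) (R$n) $ q = cybe13_23 br R m n q"
    proof -
      have "cybe13_23 br R m n q = (\<Sum>j\<in>UNIV. \<Sum>l\<in>UNIV. R$m$j * R$n$l * c j l q)"
        by (simp add: cybe13_23_def c_def)
      then show ?thesis by (simp add: e2 sum_distrib_left mult.assoc)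
    qed
    show "rmap R (dbr br R (axis m 1) (axis n 1)) $ q = br (R$m) (R$n) $ q"
      using L t1 t2 r cy[of q] by linarith
  qed
qed



lemma dbr_add2: "bilinear br \<Longrightarrow> dbr br R a (b1 + b2) = dbr br R a b1 + dbr br R a b2"
  by (simp add: dbr_def coad_add1 coad_add2 rmap_add algebra_simps)
lemma dbr_scale2: "bilinear br \<Longrightarrow> dbr br R a (c *\<^sub>R b) = c *\<^sub>R dbr br R a b"
  by (simp add: dbr_def coad_scale1 coad_scale2 rmap_scale algebra_simps)
lemma dbr_add1: "bilinear br \<Longrightarrow> dbr br R (a1 + a2) b = dbr br R a1 b + dbr br R a2 b"
  by (simp add: dbr_def coad_add1 coad_add2 rmap_add algebra_simps)
lemma dbr_scale1: "bilinear br \<Longrightarrow> dbr br R (c *\<^sub>R a) b = c *\<^sub>R dbr br R a b"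
  by (simp add: dbr_def coad_scale1 coad_scale2 rmap_scale algebra_simps)

lemma hom:
  assumes b: "bilinear br" and t: "triangular br R"
  shows "rmap R (dbr br R a c) = br (rmap R a) (rmap R c)"
proof -
  have bf: "bilinear (\<lambda>a c. rmap R (dbr br R a c))"
    unfolding bilinear_def linear_iff
    by (simp add: b dbr_add1 dbr_add2 dbr_scale1 dbr_scale2 rmap_add rmap_scale)
  have bg: "bilinear (\<lambda>a c. br (rmap R a) (rmap R c))"
    unfolding bilinear_def linear_iff
    by (simp add: b bilinear_ladd bilinear_radd bilinear_lmul bilinear_rmul rmap_add rmap_scale)
  have "(\<lambda>a c. rmap R (dbr br R a c)) = (\<lambda>a c. br (rmap R a) (rmap R c))"
  proof (rule bilinear_eq_stdbasis[OF bf bg])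
    fix i j :: "real^'a" assume "i \<in> Basis" "j \<in> Basis"
    then obtain m n where "i = axis m 1" "j = axis n 1" using axis_inverse by metis
    then show "rmap R (dbr br R i j) = br (rmap R i) (rmap R j)"
      using hom_basis[OF b t, of m n] by (simp add: rmap_axis)
  qed
  then show ?thesis by metis
qed

locale tri_ctx =
  fixes br :: "real^'n \<Rightarrow> real^'n \<Rightarrow> real^'n" and R :: "real^'n^'n"
  assumes b: "bilinear br" and t: "triangular br R" and bj: "bij (rmap R)"
begin

abbreviation "r \<equiv> rmap R"
abbreviation "s \<equiv> inv (rmap R)"

lemma sk: "transpose R = - R" using t by (simp add: triangular_def)
lemma s_lin: "linear s"
  using inj_linear_imp_inv_linear[OF rmap_linear] bj bij_is_inj by blast
lemma rs[simp]: "r (s x) = x" using bj by (simp add: bij_is_surj surj_f_inv_f)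
lemma sr[simp]: "s (r x) = x" using bj by (simp add: bij_is_inj inv_f_f)
lemma s_add: "s (x + y) = s x + s y" using s_lin by (rule linear_add)
lemma s_scale: "s (c *\<^sub>R x) = c *\<^sub>R s x" using s_lin by (rule linear_scale)

lemma brA: "br x y = r (coad br x (s y)) - r (coad br y (s x))"
proof -
  have "br x y = br (r (s x)) (r (s y))" by simp
  also have "\<dots> = r (dbr br R (s x) (s y))" by (rule hom[OF b t, symmetric])
  also have "\<dots> = r (coad br x (s y)) - r (coad br y (s x))"
    by (simp add: dbr_def linear_diff[OF rmap_linear])
  finally show ?thesis .
qed

lemma brB: "coad_star br R a y = r (coad br (r a) (s y))"
  unfolding vec_eq_iff
proof
  fix i
  have "r (coad br (r a) (s y)) $ i = - (coad br (r a) (s y) \<bullet> r (axis i 1))"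
    by (rule rmap_comp[OF sk])
  also have "\<dots> = s y \<bullet> br (r a) (r (axis i 1))" by (simp add: coad_inner[OF b])
  also have "\<dots> = s y \<bullet> r (dbr br R a (axis i 1))" by (simp add: hom[OF b t])
  also have "\<dots> = - (dbr br R a (axis i 1) \<bullet> y)" by (simp add: skew_pair[OF sk])
  also have "\<dots> = coad_star br R a y $ i" by (simp add: coad_star_def inner_commute)
  finally show "coad_star br R a y $ i = r (coad br (r a) (s y)) $ i" by simp
qed

definition Lop :: "real^'n \<Rightarrow> ((real^'n) \<times> (real^'n)) \<Rightarrow> ((real^'n) \<times> (real^'n))" where
  "Lop w Z = (r (coad br w (s (fst Z))), coad br w (snd Z))"
definition sig :: "((real^'n) \<times> (real^'n)) \<Rightarrow> real^'n" where
  "sig Z = fst Z + r (snd Z)"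

lemma dbl: "double_br br R X Y = Lop (sig X) Y - Lop (sig Y) X"
proof -
  obtain x a where X: "X = (x, a)" by (cases X)
  obtain y c where Y: "Y = (y, c)" by (cases Y)
  show ?thesis
    unfolding X Y double_br_def Lop_def sig_def
    by (simp add: brA brB dbr_def coad_add1[OF b] rmap_add linear_diff[OF rmap_linear])
qed

lemma Ncomm: "Nten R l1 l2 l3 l4 (Lop w Z) = Lop w (Nten R l1 l2 l3 l4 Z)"
proof -
  obtain x a where Z: "Z = (x, a)" by (cases Z)
  show ?thesis
    unfolding Z Nten_def Lop_def
    by (simp add: s_add s_scale coad_add2 coad_scale2 rmap_add rmap_scale)
qed

lemma Nadd: "Nten R l1 l2 l3 l4 (Z1 + Z2) = Nten R l1 l2 l3 l4 Z1 + Nten R l1 l2 l3 l4 Z2"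
  by (cases Z1, cases Z2) (simp add: Nten_def s_add rmap_add algebra_simps)
lemma Ndiff: "Nten R l1 l2 l3 l4 (Z1 - Z2) = Nten R l1 l2 l3 l4 Z1 - Nten R l1 l2 l3 l4 Z2"
  by (cases Z1, cases Z2) (simp add: Nten_def linear_diff[OF s_lin] linear_diff[OF rmap_linear] algebra_simps)

lemma main:
  "double_br br R (Nten R l1 l2 l3 l4 X) (Nten R l1 l2 l3 l4 Y)
           + Nten R l1 l2 l3 l4 (Nten R l1 l2 l3 l4 (double_br br R X Y))
         = Nten R l1 l2 l3 l4 (double_br br R (Nten R l1 l2 l3 l4 X) Y
                                + double_br br R X (Nten R l1 l2 l3 l4 Y))"
  unfolding dbl by (simp only: Nadd Ndiff Ncomm) (simp add: algebra_simps)

end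


theorem lemma4p8:
  fixes br :: "real^'n \<Rightarrow> real^'n \<Rightarrow> real^'n" and R :: "real^'n^'n"
    and l1 l2 l3 l4 :: real and X Y :: "(real^'n) \<times> (real^'n)"
  assumes "lie_algebra br" and "triangular br R" and "bij (rmap R)"
  shows "double_br br R (Nten R l1 l2 l3 l4 X) (Nten R l1 l2 l3 l4 Y)
           + Nten R l1 l2 l3 l4 (Nten R l1 l2 l3 l4 (double_br br R X Y))
         = Nten R l1 l2 l3 l4 (double_br br R (Nten R l1 l2 l3 l4 X) Y
                                + double_br br R X (Nten R l1 l2 l3 l4 Y))"
  using tri_ctx.main[of br R] assms by (simp add: tri_ctx_def lie_algebra_def)

end
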